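(* Let $K$ be a field of characteristic zero, and let $F,\ell\in K[X]$ satisfy $\deg(F)=d>1=\deg(\ell)$. Suppose that, for infinitely many $n>0$, there is a degree-one $\ell_n\in K[X]$ such that $F^n=(F\circ\ell)^n\circ\ell_n$. Then either (1) $F^k=(F\circ\ell)^k$ for some $k\in\mathbb{N}$; or (2) $F=v^{-1}\circ\epsilon X^d\circ v$ and $\ell=v^{-1}\circ\delta X\circ v$ for some degree-one $v\in K[X]$ and some $\epsilon,\delta\in K^*$.
   Context: $F^n$ denotes the $n$-th iterate of $F$ under composition $\circ$; $v^{-1}$ is the compositional inverse of the degree-one polynomial $v$. *)

theory Defs
  imports "HOL-Computational_Algebra.Polynomial"
begin

definition poly_iter :: "'a::comm_ring_1 poly \<Rightarrow> nat \<Rightarrow> 'a poly" where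
  "poly_iter F n = ((\<lambda>q. pcompose F q) ^^ n) [:0, 1:]"

definition poly_comp_inv :: "'a::field poly \<Rightarrow> 'a poly" where
  "poly_comp_inv v = [: - coeff v 0 / coeff v 1, 1 / coeff v 1 :]"

end

theory Submission
  imports Defs
begin


lemma poly_iter_0[simp]: "poly_iter F 0 = [:0,1:]"
  by (simp add: poly_iter_def)

lemma poly_iter_Suc: "poly_iter F (Suc n) = pcompose F (poly_iter F n)"
  by (simp add: poly_iter_def)

lemma pcompose_idL[simp]: "pcompose [:0,1:] p = (p::'a::comm_ring_1 poly)"
  by (simp add: pcompose_pCons)

lemma poly_iter_add: "poly_iter F (a+b) = pcompose (poly_iter F a) (poly_iter F b)"
  by (induction a) (simp_all add: poly_iter_Suc pcompose_assoc)

lemma degree_poly_iter: "degree (poly_iter (F::'a::field poly) n) = degree F ^ n"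
  by (induction n) (simp_all add: poly_iter_Suc degree_pcompose)

lemma pcompose_cancel_right:
  fixes A B H :: "'a::field poly"
  assumes "pcompose A H = pcompose B H" "degree H > 0"
  shows "A = B"
proof -
  have "pcompose (A - B) H = 0" using assms(1) by (simp add: pcompose_diff)
  then have "A - B = 0" using pcompose_eq_0[OF _ assms(2)] by blast
  then show ?thesis by simp
qed

lemma linear_form:
  assumes "degree (p::'a::comm_ring_1 poly) = 1"
  shows "p = [:coeff p 0, coeff p 1:]" "coeff p 1 \<noteq> 0"
proof -
  show "p = [:coeff p 0, coeff p 1:]"
    by (rule poly_eqI) (auto simp: coeff_pCons coeff_eq_0 assms split: nat.splits)
  show "coeff p 1 \<noteq> 0" using assms by (metis leading_coeff_0_iff one_neq_zero degree_0)
qed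

lemma pcompose_monom: "pcompose (monom c i) q = smult c (q ^ i)"
  by (induction i) (simp_all add: monom_Suc pcompose_pCons monom_0)

lemma coeff_pcompose_sum:
  "coeff (pcompose p q) j = (\<Sum>i\<le>degree p. coeff p i * coeff (q ^ i) j)"
proof -
  have "pcompose p q = pcompose (\<Sum>i\<le>degree p. monom (coeff p i) i) q"
    by (simp add: poly_as_sum_of_monoms)
  also have "\<dots> = (\<Sum>i\<le>degree p. smult (coeff p i) (q ^ i))"
    by (simp add: pcompose_sum pcompose_monom)
  finally show ?thesis by (simp add: coeff_sum)
qed

lemma pcompose_lin_lin:
  "pcompose [:a,b:] [:c,e:] = [:a + b*c, b*e:]"
  by (simp add: pcompose_pCons)

lemma coeff_pcompose_lin_left:
  "coeff (pcompose [:m0,m1:] F) j = (if j = 0 then m0 else 0) + m1 * coeff F j"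
  by (simp add: pcompose_pCons coeff_pCons split: nat.splits)



lemma pcompose_as_sum: "pcompose A P = (\<Sum>i\<le>degree A. smult (coeff A i) (P ^ i))"
proof -
  have "pcompose A P = pcompose (\<Sum>i\<le>degree A. monom (coeff A i) i) P"
    by (simp add: poly_as_sum_of_monoms)
  also have "\<dots> = (\<Sum>i\<le>degree A. smult (coeff A i) (P ^ i))"
    by (simp add: pcompose_sum pcompose_monom)
  finally show ?thesis .
qed

lemma rf_core:
  fixes A B P Q :: "'a::field_char_0 poly"
  assumes eq: "pcompose A P = pcompose B Q" and dAB: "degree A = degree B" and dA: "degree A \<ge> 1"
    and dP: "degree P = m" and dQ: "degree Q = m" and m1: "m \<ge> 1"
    and lP: "lead_coeff P = 1" and lQ: "lead_coeff Q = 1"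
    and cP: "coeff P 0 = 0" and cQ: "coeff Q 0 = 0"
  shows "P = Q"
proof (rule ccontr)
  assume ne: "P \<noteq> Q"
  define R where "R = P - Q"
  have R0: "R \<noteq> 0" using ne by (simp add: R_def)
  have "degree R \<le> m" using dP dQ degree_diff_le[of P m Q] by (simp add: R_def)
  moreover have "coeff R m = 0" using lP lQ dP dQ by (simp add: R_def)
  ultimately have dRm: "degree R < m" using R0
    by (metis le_neq_implies_less leading_coeff_0_iff)
  have dR1: "degree R \<ge> 1"
  proof (rule ccontr)
    assume "\<not> degree R \<ge> 1"
    then have "degree R = 0" by simp
    then have "R = [:coeff R 0:]" by (metis degree_0_id)
    moreover have "coeff R 0 = 0" using cP cQ by (simp add: R_def)
    ultimately show False using R0 by simp
  qed
  define k where "k = degree A"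
  define S where "S i = (\<Sum>t<i. Q ^ (i - Suc t) * P ^ t)" for i
  have PQ0: "P \<noteq> 0" "Q \<noteq> 0" using lP lQ by auto
  have Sprop: "degree (S i) \<le> (i-1)*m \<and> coeff (S i) ((i-1)*m) = of_nat i" if "i \<ge> 1" for i
  proof -
    have trm: "degree (Q ^ (i - Suc t) * P ^ t) = (i-1)*m \<and> coeff (Q ^ (i - Suc t) * P ^ t) ((i-1)*m) = 1"
      if "t < i" for t
    proof -
      have d: "degree (Q ^ (i - Suc t) * P ^ t) = (i - Suc t)*m + t*m"
        using PQ0 dP dQ by (simp add: degree_mult_eq degree_power_eq)
      have e: "(i - Suc t)*m + t*m = (i-1)*m" using that by (simp add: add_mult_distrib[symmetric])
      have "lead_coeff (Q ^ (i - Suc t) * P ^ t) = 1"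
        using lP lQ by (simp add: lead_coeff_mult lead_coeff_power)
      then show ?thesis using d e by simp
    qed
    have "degree (S i) \<le> (i-1)*m"
      unfolding S_def by (rule degree_sum_le) (use trm in auto)
    moreover have "coeff (S i) ((i-1)*m) = (\<Sum>t<i. 1)"
      unfolding S_def coeff_sum by (rule sum.cong) (use trm in auto)
    ultimately show ?thesis by simp
  qed
  have S0: "S 0 = 0" by (simp add: S_def)
  define W where "W = (\<Sum>i\<le>k. smult (coeff A i) (S i))"
  have diff: "pcompose A P - pcompose A Q = R * W"
  proof -
    have "pcompose A P - pcompose A Q = (\<Sum>i\<le>k. smult (coeff A i) (P ^ i - Q ^ i))"
      by (simp add: pcompose_as_sum k_def sum_subtractf[symmetric] smult_diff_right)
    also have "\<dots> = (\<Sum>i\<le>k. smult (coeff A i) (R * S i))"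
      by (rule sum.cong) (simp_all add: power_diff_sumr2 R_def S_def)
    also have "\<dots> = R * W"
      by (simp add: W_def sum_distrib_left mult_smult_right)
    finally show ?thesis .
  qed
  have kpos: "k \<ge> 1" using dA k_def by simp
  have Ak: "coeff A k \<noteq> 0" using dA by (auto simp: k_def)
  have degW_le: "degree W \<le> (k-1)*m"
    unfolding W_def
  proof (rule degree_sum_le)
    fix i assume "i \<in> {..k}"
    then have ik: "i \<le> k" by simp
    show "degree (smult (coeff A i) (S i)) \<le> (k-1)*m"
    proof (cases "i = 0")
      case True then show ?thesis by (simp add: S0)
    next
      case False
      then have "degree (S i) \<le> (i-1)*m" using Sprop by simp
      also have "(i-1)*m \<le> (k-1)*m" using ik by (intro mult_le_mono1) simp
      finally show ?thesis using degree_smult_le order_trans by blast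
    qed
  qed simp
  have coeffW: "coeff W ((k-1)*m) = coeff A k * of_nat k"
  proof -
    have "coeff W ((k-1)*m) = (\<Sum>i\<le>k. coeff A i * coeff (S i) ((k-1)*m))"
      by (simp add: W_def coeff_sum)
    also have "\<dots> = (\<Sum>i\<in>{k}. coeff A i * coeff (S i) ((k-1)*m))"
    proof (rule sum.mono_neutral_right)
      show "\<forall>i\<in>{..k} - {k}. coeff A i * coeff (S i) ((k - 1) * m) = 0"
      proof
        fix i assume "i \<in> {..k} - {k}"
        then have ik: "i < k" by auto
        show "coeff A i * coeff (S i) ((k - 1) * m) = 0"
        proof (cases "i = 0")
          case True then show ?thesis by (simp add: S0)
        next
          case False
          then have "degree (S i) \<le> (i-1)*m" using Sprop by simp
          also have "(i-1)*m < (k-1)*m" using ik False m1 by simp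
          finally show ?thesis by (simp add: coeff_eq_0)
        qed
      qed
    qed auto
    also have "\<dots> = coeff A k * of_nat k" using Sprop kpos by simp
    finally show ?thesis .
  qed
  have "coeff W ((k-1)*m) \<noteq> 0" using coeffW Ak kpos by simp
  then have W0: "W \<noteq> 0" and dW: "degree W = (k-1)*m"
    using degW_le le_degree by (auto intro: antisym)
  have "R * W = pcompose (B - A) Q" using diff eq by (simp add: pcompose_diff)
  then have "degree (R * W) = degree (B - A) * m"
    using dQ by (simp add: degree_pcompose)
  then have "degree R + (k-1)*m = degree (B - A) * m"
    using R0 W0 dW by (simp add: degree_mult_eq)
  then have "(degree R + (k-1)*m) mod m = 0" by (metis mod_mult_self1_is_0 mult.commute)
  moreover have "(degree R + (k-1)*m) mod m = degree R mod m" by (rule mod_mult_self1)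
  ultimately have "degree R mod m = 0" by simp
  moreover have "degree R mod m = degree R" using dRm by (rule mod_less)
  ultimately show False using dR1 by simp
qed



lemma normalize_poly:
  fixes P :: "'a::field poly"
  assumes "degree P \<ge> 1"
  shows "\<exists>P1 a c. c \<noteq> 0 \<and> P = pcompose [:a,c:] P1 \<and> degree P1 = degree P
          \<and> lead_coeff P1 = 1 \<and> coeff P1 0 = 0"
proof -
  define a where "a = coeff P 0"
  define c where "c = lead_coeff P"
  have c0: "c \<noteq> 0" using assms by (auto simp: c_def)
  define P1 where "P1 = smult (1/c) (P - [:a:])"
  have "degree (-[:a:]) < degree P" using assms by simp
  then have dd: "degree (P - [:a:]) = degree P"
    using degree_add_eq_left[of "-[:a:]" P] by (simp add: diff_conv_add_uminus)
  have "pcompose [:a,c:] P1 = [:a:] + smult c P1"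
    by (simp add: pcompose_pCons mult.commute)
  also have "\<dots> = P" using c0 by (simp add: P1_def)
  finally have 1: "P = pcompose [:a,c:] P1" by simp
  have 2: "degree P1 = degree P" using c0 dd by (simp add: P1_def)
  have 3: "lead_coeff P1 = 1" using c0 dd 2 assms by (simp add: P1_def c_def coeff_pCons split: nat.splits)
  have 4: "coeff P1 0 = 0" by (simp add: P1_def a_def)
  show ?thesis using c0 1 2 3 4 by blast
qed

lemma rf:
  fixes A B P Q :: "'a::field_char_0 poly"
  assumes eq: "pcompose A P = pcompose B Q" and dAB: "degree A = degree B" and dA: "degree A \<ge> 1"
    and dPQ: "degree P = degree Q" and dP: "degree P \<ge> 1"
  shows "\<exists>\<mu>. degree \<mu> = 1 \<and> Q = pcompose \<mu> P"
proof -
  obtain P1 a c where Pn: "c \<noteq> 0" "P = pcompose [:a,c:] P1" "degree P1 = degree P"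
          "lead_coeff P1 = 1" "coeff P1 0 = 0" using normalize_poly[OF dP] by blast
  obtain Q1 b e where Qn: "e \<noteq> 0" "Q = pcompose [:b,e:] Q1" "degree Q1 = degree Q"
          "lead_coeff Q1 = 1" "coeff Q1 0 = 0" using normalize_poly[of Q] dP dPQ by auto
  have "pcompose (pcompose A [:a,c:]) P1 = pcompose (pcompose B [:b,e:]) Q1"
    using eq Pn(2) Qn(2) by (simp add: pcompose_assoc)
  moreover have "degree (pcompose A [:a,c:]) = degree A" using Pn(1) by (simp add: degree_pcompose)
  moreover have "degree (pcompose B [:b,e:]) = degree B" using Qn(1) by (simp add: degree_pcompose)
  ultimately have "P1 = Q1"
    using rf_core[of "pcompose A [:a,c:]" P1 "pcompose B [:b,e:]" Q1 "degree P"] dAB dA dP dPQ Pn Qn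
    by simp
  have "pcompose [:-a/c, 1/c:] P = P1" using Pn(1,2)
    by (simp add: pcompose_assoc pcompose_lin_lin)
  then have "Q = pcompose (pcompose [:b,e:] [:-a/c, 1/c:]) P"
    using Qn(2) \<open>P1 = Q1\<close> by (metis pcompose_assoc)
  moreover have "degree (pcompose [:b,e:] [:-a/c, 1/c:]) = 1"
    using Pn(1) Qn(1) by (simp add: pcompose_lin_lin)
  ultimately show ?thesis by blast
qed



lemma sigma_lemma:
  fixes F :: "'a::field_char_0 poly"
  assumes dF: "degree F = d" and d2: "d \<ge> 2" and c1: "coeff F (d-1) = 0"
    and eq: "pcompose F [:\<beta>,\<alpha>:] = pcompose [:m0,m1:] F" and a0: "\<alpha> \<noteq> 0"
  shows "\<beta> = 0 \<and> m1 = \<alpha>^d \<and> m0 = coeff F 0 - \<alpha>^d * coeff F 0 \<and>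
         (\<forall>i. 1 \<le> i \<and> i < d \<and> coeff F i \<noteq> 0 \<longrightarrow> \<alpha>^(d-i) = 1)"
proof -
  obtain e where de: "d = Suc (Suc e)" using d2 by (metis add_2_eq_Suc le_Suc_ex)
  have Fd: "coeff F d \<noteq> 0" using dF d2 by auto
  have "coeff (pcompose F [:\<beta>,\<alpha>:]) (Suc e)
        = (\<Sum>i\<le>e. coeff F i * coeff ([:\<beta>,\<alpha>:] ^ i) (Suc e))
          + coeff F (Suc e) * coeff ([:\<beta>,\<alpha>:] ^ (Suc e)) (Suc e)
          + coeff F d * coeff ([:\<beta>,\<alpha>:] ^ d) (Suc e)"
    by (simp add: coeff_pcompose_sum dF de)
  also have "(\<Sum>i\<le>e. coeff F i * coeff ([:\<beta>,\<alpha>:] ^ i) (Suc e)) = 0"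
  proof (rule sum.neutral, intro ballI)
    fix i assume "i \<in> {..e}"
    moreover have "degree [:\<beta>,\<alpha>:] \<le> 1" by simp
    ultimately have "degree ([:\<beta>,\<alpha>:] ^ i) < Suc e"
      using degree_power_le[of "[:\<beta>,\<alpha>:]" i]
      by (metis atMost_iff le_imp_less_Suc mult_le_mono1 mult_1 order_trans)
    then show "coeff F i * coeff ([:\<beta>,\<alpha>:] ^ i) (Suc e) = 0" by (simp add: coeff_eq_0)
  qed
  also have "coeff F (Suc e) = 0" using c1 de by simp
  also have "coeff ([:\<beta>,\<alpha>:] ^ d) (Suc e) = of_nat d * \<alpha> ^ (Suc e) * \<beta>"
    using coeff_linear_poly_power[of "Suc e" d \<beta> \<alpha>] de by simp
  finally have L: "coeff (pcompose F [:\<beta>,\<alpha>:]) (Suc e) = coeff F d * (of_nat d * \<alpha> ^ (Suc e) * \<beta>)"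
    by simp
  have "coeff (pcompose [:m0,m1:] F) (Suc e) = 0"
    using c1 de by (simp add: coeff_pcompose_lin_left)
  then have "coeff F d * (of_nat d * \<alpha> ^ (Suc e) * \<beta>) = 0" using L eq by simp
  moreover have "(of_nat d :: 'a) \<noteq> 0" using d2 by simp
  ultimately have b0: "\<beta> = 0" using Fd a0 by simp
  have cf: "\<alpha>^i * coeff F i = (if i = 0 then m0 else 0) + m1 * coeff F i" for i
    using arg_cong[OF eq, of "\<lambda>p. coeff p i"] b0
    by (simp add: coeff_pcompose_linear coeff_pcompose_lin_left)
  have m1: "m1 = \<alpha>^d" using cf[of d] Fd de by simp
  have m0: "m0 = coeff F 0 - \<alpha>^d * coeff F 0" using cf[of 0] m1 by (simp add: algebra_simps)
  have "\<alpha>^(d-i) = 1" if "1 \<le> i" "i < d" "coeff F i \<noteq> 0" for i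
  proof -
    have "\<alpha>^i = \<alpha>^d" using cf[of i] that m1 by simp
    also have "\<alpha>^d = \<alpha>^i * \<alpha>^(d-i)" using that by (simp add: power_add[symmetric])
    finally show ?thesis using a0 by simp
  qed
  then show ?thesis using b0 m1 m0 by blast
qed



lemma repeat_lemma:
  fixes F G ln :: "'a::field poly"
  assumes dF: "degree F \<ge> 1"
    and ch: "\<And>j. j \<le> n \<Longrightarrow> pcompose (poly_iter G j) ln = pcompose (\<tau> j) (poly_iter F j)"
    and tn: "\<tau> n = [:0,1:]"
    and ab: "a < b" "b \<le> n" "\<tau> a = \<tau> b"
  shows "\<exists>k::nat. k \<ge> 1 \<and> poly_iter F k = poly_iter G k"
proof -
  have dpos: "degree (poly_iter F t) > 0" for t
    using dF by (simp add: degree_poly_iter)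
  have gen: "pcompose (poly_iter G t) (\<tau> j) = pcompose (\<tau> (t+j)) (poly_iter F t)"
    if "t + j \<le> n" for t j
  proof -
    have "pcompose (pcompose (poly_iter G t) (\<tau> j)) (poly_iter F j)
          = pcompose (poly_iter G t) (pcompose (poly_iter G j) ln)"
      using ch[of j] that by (simp add: pcompose_assoc)
    also have "\<dots> = pcompose (poly_iter G (t+j)) ln"
      by (simp add: poly_iter_add pcompose_assoc)
    also have "\<dots> = pcompose (\<tau> (t+j)) (poly_iter F (t+j))" using ch that by simp
    also have "\<dots> = pcompose (pcompose (\<tau> (t+j)) (poly_iter F t)) (poly_iter F j)"
      by (simp add: poly_iter_add pcompose_assoc)
    finally show ?thesis using pcompose_cancel_right dpos by blast
  qed
  define t where "t = n - b"
  have "pcompose (poly_iter G t) (\<tau> b) = poly_iter F t"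
    using gen[of t b] tn ab by (simp add: t_def)
  moreover have "pcompose (poly_iter G t) (\<tau> a) = pcompose (\<tau> (t+a)) (poly_iter F t)"
    using gen[of t a] ab by (simp add: t_def)
  ultimately have "pcompose (\<tau> (t+a)) (poly_iter F t) = pcompose [:0,1:] (poly_iter F t)"
    using ab by simp
  then have ta: "\<tau> (t+a) = [:0,1:]" using pcompose_cancel_right dpos by blast
  have "pcompose (poly_iter G (b-a)) (\<tau> (t+a)) = pcompose (\<tau> (b - a + (t+a))) (poly_iter F (b-a))"
    using gen[of "b-a" "t+a"] ab by (simp add: t_def)
  moreover have "b - a + (t+a) = n" using ab by (simp add: t_def)
  ultimately have "poly_iter G (b-a) = poly_iter F (b-a)" using ta tn by simp
  then show ?thesis using ab by (intro exI[of _ "b-a"]) auto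
qed



lemma centered_main:
  fixes F l :: "'a::field_char_0 poly" and d :: nat
  assumes dF: "degree F = d" and d1: "d > 1" and dl: "degree l = 1" and c1: "coeff F (d-1) = 0"
    and inf: "infinite {n::nat. n > 0 \<and> (\<exists>ln. degree ln = 1 \<and>
            poly_iter F n = pcompose (poly_iter (pcompose F l) n) ln)}"
  shows "(\<exists>k::nat. k \<ge> 1 \<and> poly_iter F k = poly_iter (pcompose F l) k)
       \<or> (\<exists>\<epsilon> \<delta>. \<epsilon> \<noteq> 0 \<and> \<delta> \<noteq> 0 \<and> F = monom \<epsilon> d \<and> l = monom \<delta> 1)"
proof -
  define G where "G = pcompose F l"
  have dG: "degree G = d" using dF dl by (simp add: G_def degree_pcompose)
  define E where "E = {a::'a. \<forall>i. 1 \<le> i \<and> i < d \<and> coeff F i \<noteq> 0 \<longrightarrow> a^(d-i) = 1}"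
  obtain n where nS: "n \<in> {n::nat. n > 0 \<and> (\<exists>ln. degree ln = 1 \<and>
            poly_iter F n = pcompose (poly_iter (pcompose F l) n) ln)}" and nge: "n \<ge> card E + d + 3"
    using inf by (meson infinite_nat_iff_unbounded_le)
  then obtain ln where dln: "degree ln = 1" and hn: "poly_iter F n = pcompose (poly_iter G n) ln"
    by (auto simp: G_def)
  have dpos: "degree (poly_iter F t) > 0" for t
    using dF d1 by (simp add: degree_poly_iter)
  have "\<exists>\<mu>. j \<le> n \<longrightarrow> degree \<mu> = 1 \<and> pcompose (poly_iter G j) ln = pcompose \<mu> (poly_iter F j)" for j
  proof (cases "j \<le> n")
    case True
    have "pcompose (poly_iter F (n-j)) (poly_iter F j) = pcompose (poly_iter G (n-j)) (pcompose (poly_iter G j) ln)"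
      using hn True by (simp add: poly_iter_add[symmetric] pcompose_assoc)
    moreover have "degree (poly_iter F (n-j)) = degree (poly_iter G (n-j))"
      using dF dG by (simp add: degree_poly_iter)
    moreover have "degree (poly_iter F (n-j)) \<ge> 1" using dpos by (simp add: Suc_le_eq)
    moreover have "degree (poly_iter F j) = degree (pcompose (poly_iter G j) ln)"
      using dF dG dln by (simp add: degree_poly_iter degree_pcompose)
    moreover have "degree (poly_iter F j) \<ge> 1" using dpos by (simp add: Suc_le_eq)
    ultimately show ?thesis using rf by blast
  qed simp
  then obtain \<tau> where tau: "\<And>j. j \<le> n \<Longrightarrow> degree (\<tau> j) = 1 \<and>
       pcompose (poly_iter G j) ln = pcompose (\<tau> j) (poly_iter F j)"
    by metis
  have ch: "\<And>j. j \<le> n \<Longrightarrow> pcompose (poly_iter G j) ln = pcompose (\<tau> j) (poly_iter F j)"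
    using tau by blast
  have step: "pcompose F (pcompose l (\<tau> j)) = pcompose (\<tau> (Suc j)) F" if "j < n" for j
  proof -
    have "pcompose (pcompose G (\<tau> j)) (poly_iter F j) = pcompose (poly_iter G (Suc j)) ln"
      using ch[of j] that by (simp add: poly_iter_Suc flip: pcompose_assoc)
    also have "\<dots> = pcompose (\<tau> (Suc j)) (poly_iter F (Suc j))" using ch[of "Suc j"] that by simp
    also have "\<dots> = pcompose (pcompose (\<tau> (Suc j)) F) (poly_iter F j)"
      by (simp add: poly_iter_Suc pcompose_assoc)
    finally have "pcompose G (\<tau> j) = pcompose (\<tau> (Suc j)) F"
      using pcompose_cancel_right dpos by blast
    then show ?thesis by (simp add: G_def pcompose_assoc)
  qed
  have tn: "\<tau> n = [:0,1:]"
  proof -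
    have "pcompose (\<tau> n) (poly_iter F n) = pcompose [:0,1:] (poly_iter F n)"
      using ch[of n] hn by simp
    then show ?thesis using pcompose_cancel_right dpos by blast
  qed
  have REP: "\<exists>k::nat. k \<ge> 1 \<and> poly_iter F k = poly_iter G k" if "a < b" "b \<le> n" "\<tau> a = \<tau> b" for a b
    using repeat_lemma[of F n G ln \<tau> a b] ch tn that dF d1 by auto
  obtain q p where lqp: "l = [:q,p:]" and p0: "p \<noteq> 0"
    using linear_form[OF dl] by blast
  define f0 where "f0 = coeff F 0"
  define al where "al j = coeff (pcompose l (\<tau> j)) 1" for j
  have sig: "coeff (pcompose l (\<tau> j)) 0 = 0 \<and> \<tau> (Suc j) = [:f0 - (al j)^d * f0, (al j)^d:] \<and> al j \<in> E"
    if "j < n" for j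
  proof -
    have d1l: "degree (pcompose l (\<tau> j)) = 1" using tau[of j] that dl by (simp add: degree_pcompose)
    note L = linear_form[OF d1l]
    have d1t: "degree (\<tau> (Suc j)) = 1" using tau[of "Suc j"] that by simp
    note T = linear_form[OF d1t]
    have "pcompose F [:coeff (pcompose l (\<tau> j)) 0, al j:] = pcompose [:coeff (\<tau> (Suc j)) 0, coeff (\<tau> (Suc j)) 1:] F"
      using step[OF that] L(1) T(1) by (simp add: al_def)
    from sigma_lemma[OF dF _ c1 this] L(2) d1
    have "coeff (pcompose l (\<tau> j)) 0 = 0 \<and> coeff (\<tau> (Suc j)) 1 = al j ^ d \<and>
          coeff (\<tau> (Suc j)) 0 = coeff F 0 - al j ^ d * coeff F 0 \<and>
          (\<forall>i. 1 \<le> i \<and> i < d \<and> coeff F i \<noteq> 0 \<longrightarrow> al j ^ (d - i) = 1)"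
      by (simp add: al_def)
    then show ?thesis using T(1) by (auto simp: E_def f0_def)
  qed
  have tform: "\<exists>g. \<tau> j = [:f0 - g * f0, g:] \<and> coeff (pcompose l (\<tau> j)) 0 = 0"
    if j1: "1 \<le> j" and jn: "j < n" for j
  proof -
    obtain i where j: "j = Suc i" using j1 by (cases j) auto
    show ?thesis using sig[of i] sig[of j] jn j by auto
  qed
  show ?thesis
  proof (cases "f0 = 0")
    case False
    obtain g1 where g1: "\<tau> 1 = [:f0 - g1 * f0, g1:]" "coeff (pcompose l (\<tau> 1)) 0 = 0"
      using tform[of 1] nge by auto
    obtain g2 where g2: "\<tau> 2 = [:f0 - g2 * f0, g2:]" "coeff (pcompose l (\<tau> 2)) 0 = 0"
      using tform[of 2] nge by auto
    have "q + p * (f0 - g1 * f0) = 0" using g1 by (simp add: lqp pcompose_lin_lin)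
    moreover have "q + p * (f0 - g2 * f0) = 0" using g2 by (simp add: lqp pcompose_lin_lin)
    ultimately have "p * f0 * g1 = p * f0 * g2" by (simp add: algebra_simps)
    then have "g1 = g2" using p0 False by simp
    then have "\<tau> 1 = \<tau> 2" using g1 g2 by simp
    then show ?thesis using REP[of 1 2] nge by (auto simp: G_def)
  next
    case True
    obtain g1 where g1: "\<tau> 1 = [:f0 - g1 * f0, g1:]" "coeff (pcompose l (\<tau> 1)) 0 = 0"
      using tform[of 1] nge by auto
    then have q0: "q = 0" using True by (simp add: lqp pcompose_lin_lin)
    show ?thesis
    proof (cases "\<exists>i. 1 \<le> i \<and> i < d \<and> coeff F i \<noteq> 0")
      case True
      then obtain i where i: "1 \<le> i" "i < d" "coeff F i \<noteq> 0" by blast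
      have "E \<subseteq> {a. poly (monom 1 (d-i) - 1) a = 0}" using i by (auto simp: E_def poly_monom)
      moreover have "monom (1::'a) (d-i) - 1 \<noteq> 0"
      proof
        assume "monom (1::'a) (d-i) - 1 = 0"
        then have "coeff (monom (1::'a) (d-i) - 1) (d-i) = 0" by simp
        then show False using i by simp
      qed
      ultimately have finE: "finite E" using poly_roots_finite finite_subset by blast
      have sub: "\<tau> ` {1..n} \<subseteq> (\<lambda>a. [:0, a^d:]) ` E"
      proof
        fix x assume "x \<in> \<tau> ` {1..n}"
        then obtain j where j: "j \<in> {1..n}" "x = \<tau> j" by blast
        then obtain i' where ji: "j = Suc i'" by (cases j) auto
        then show "x \<in> (\<lambda>a. [:0, a^d:]) ` E" using sig[of i'] j \<open>f0 = 0\<close> by auto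
      qed
      have "card (\<tau> ` {1..n}) \<le> card ((\<lambda>a. [:0, a^d:]) ` E)"
        using sub finE by (intro card_mono) auto
      also have "\<dots> \<le> card E" using finE by (rule card_image_le)
      also have "\<dots> < n" using nge by simp
      finally have "\<not> inj_on \<tau> {1..n}" using card_image by fastforce
      then obtain a b where ab: "a \<in> {1..n}" "b \<in> {1..n}" "a \<noteq> b" "\<tau> a = \<tau> b"
        by (auto simp: inj_on_def)
      show ?thesis
      proof (cases "a < b")
        case True then show ?thesis using REP[of a b] ab by (auto simp: G_def)
      next
        case False then have "b < a" using ab by simp
        then show ?thesis using REP[of b a] ab by (auto simp: G_def)
      qed
    next
      case False
      have "F = monom (coeff F d) d"
      proof (rule poly_eqI)
        fix i
        show "coeff F i = coeff (monom (coeff F d) d) i"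
        proof (cases "i = 0 \<or> (1 \<le> i \<and> i < d)")
          case True then show ?thesis using False \<open>f0 = 0\<close> d1 by (auto simp: f0_def)
        next
          case nt: False
          then show ?thesis using dF by (cases "i = d") (auto simp: coeff_eq_0)
        qed
      qed
      moreover have "l = monom p 1" using lqp q0 by (simp add: monom_Suc monom_0)
      moreover have "coeff F d \<noteq> 0" using dF d1 by auto
      ultimately show ?thesis using p0 by blast
    qed
  qed
qed



lemma coeff_pcompose_lin_top:
  fixes F :: "'a::comm_ring_1 poly"
  assumes dF: "degree F = d" and d2: "d \<ge> 2"
  shows "coeff (pcompose F [:\<beta>,\<alpha>:]) (d-1) = coeff F (d-1) * \<alpha>^(d-1) + coeff F d * (of_nat d * \<alpha>^(d-1) * \<beta>)"
proof -
  obtain e where de: "d = Suc (Suc e)" using d2 by (metis add_2_eq_Suc le_Suc_ex)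
  have "coeff (pcompose F [:\<beta>,\<alpha>:]) (Suc e)
        = (\<Sum>i\<le>e. coeff F i * coeff ([:\<beta>,\<alpha>:] ^ i) (Suc e))
          + coeff F (Suc e) * coeff ([:\<beta>,\<alpha>:] ^ (Suc e)) (Suc e)
          + coeff F d * coeff ([:\<beta>,\<alpha>:] ^ d) (Suc e)"
    by (simp add: coeff_pcompose_sum dF de)
  also have "(\<Sum>i\<le>e. coeff F i * coeff ([:\<beta>,\<alpha>:] ^ i) (Suc e)) = 0"
  proof (rule sum.neutral, intro ballI)
    fix i assume "i \<in> {..e}"
    moreover have "degree [:\<beta>,\<alpha>:] \<le> 1" by simp
    ultimately have "degree ([:\<beta>,\<alpha>:] ^ i) < Suc e"
      using degree_power_le[of "[:\<beta>,\<alpha>:]" i]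
      by (metis atMost_iff le_imp_less_Suc mult_le_mono1 mult_1 order_trans)
    then show "coeff F i * coeff ([:\<beta>,\<alpha>:] ^ i) (Suc e) = 0" by (simp add: coeff_eq_0)
  qed
  also have "coeff ([:\<beta>,\<alpha>:] ^ (Suc e)) (Suc e) = \<alpha>^(Suc e)"
    using coeff_linear_poly_power[of "Suc e" "Suc e" \<beta> \<alpha>] by simp
  also have "coeff ([:\<beta>,\<alpha>:] ^ d) (Suc e) = of_nat d * \<alpha> ^ (Suc e) * \<beta>"
    using coeff_linear_poly_power[of "Suc e" d \<beta> \<alpha>] de by simp
  finally show ?thesis using de by simp
qed

lemma conj_iter:
  assumes "pcompose ui u = [:0,1:]" "pcompose u ui = [:0,1:]"
  shows "poly_iter (pcompose ui (pcompose F u)) n = pcompose ui (pcompose (poly_iter F n) u)"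
proof (induction n)
  case 0 then show ?case using assms by simp
next
  case (Suc n)
  have "pcompose (pcompose ui (pcompose F u)) (pcompose ui (pcompose (poly_iter F n) u))
      = pcompose ui (pcompose F (pcompose (pcompose u ui) (pcompose (poly_iter F n) u)))"
    by (simp add: pcompose_assoc)
  also have "\<dots> = pcompose ui (pcompose (pcompose F (poly_iter F n)) u)"
    using assms by (simp add: pcompose_assoc)
  finally show ?case using Suc by (simp add: poly_iter_Suc)
qed



theorem proposition3p3:
  fixes F l :: "'a::field_char_0 poly" and d :: nat
  assumes "degree F = d" and "d > 1" and "degree l = 1"
    and "infinite {n::nat. n > 0 \<and> (\<exists>ln. degree ln = 1 \<and>
            poly_iter F n = pcompose (poly_iter (pcompose F l) n) ln)}"
  shows "(\<exists>k::nat. k \<ge> 1 \<and> poly_iter F k = poly_iter (pcompose F l) k)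
       \<or> (\<exists>v \<epsilon> \<delta>. degree v = 1 \<and> \<epsilon> \<noteq> 0 \<and> \<delta> \<noteq> 0 \<and>
            F = pcompose (poly_comp_inv v) (pcompose (monom \<epsilon> d) v) \<and>
            l = pcompose (poly_comp_inv v) (pcompose (monom \<delta> 1) v))"
proof -
  note dF = assms(1) and d1 = assms(2) and dl = assms(3) and inf = assms(4)
  define t where "t = - coeff F (d-1) / (of_nat d * lead_coeff F)"
  define u where "u = [:t, 1:]"
  define ui where "ui = [:-t, 1:]"
  have uu: "pcompose ui u = [:0,1:]" "pcompose u ui = [:0,1:]"
    by (simp_all add: u_def ui_def pcompose_lin_lin)
  define F' where "F' = pcompose ui (pcompose F u)"
  define l' where "l' = pcompose ui (pcompose l u)"
  define G where "G = pcompose F l"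
  have G': "pcompose F' l' = pcompose ui (pcompose G u)"
  proof -
    have "pcompose F' l' = pcompose ui (pcompose F (pcompose (pcompose u ui) (pcompose l u)))"
      by (simp add: F'_def l'_def pcompose_assoc)
    also have "\<dots> = pcompose ui (pcompose G u)" using uu by (simp add: G_def pcompose_assoc)
    finally show ?thesis .
  qed
  have dF': "degree F' = d" using dF by (simp add: F'_def degree_pcompose u_def ui_def)
  have dl': "degree l' = 1" using dl by (simp add: l'_def degree_pcompose u_def ui_def)
  have lc: "lead_coeff F \<noteq> 0" using dF d1 by auto
  have c1: "coeff F' (d-1) = 0"
  proof -
    have "coeff F' (d-1) = coeff (pcompose F u) (d-1)"
      using d1 by (simp add: F'_def ui_def coeff_pcompose_lin_left)
    also have "\<dots> = coeff F (d-1) + lead_coeff F * (of_nat d * t)"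
      using coeff_pcompose_lin_top[OF dF, of t 1] d1 dF by (simp add: u_def)
    also have "\<dots> = 0" using lc d1 by (simp add: t_def)
    finally show ?thesis .
  qed
  have it: "poly_iter F' n = pcompose ui (pcompose (poly_iter F n) u)" for n
    unfolding F'_def by (rule conj_iter[OF uu])
  have itG: "poly_iter (pcompose F' l') n = pcompose ui (pcompose (poly_iter G n) u)" for n
    unfolding G' by (rule conj_iter[OF uu])
  have sub: "{n::nat. n > 0 \<and> (\<exists>ln. degree ln = 1 \<and>
            poly_iter F n = pcompose (poly_iter (pcompose F l) n) ln)}
        \<subseteq> {n::nat. n > 0 \<and> (\<exists>ln. degree ln = 1 \<and>
            poly_iter F' n = pcompose (poly_iter (pcompose F' l') n) ln)}"
  proof
    fix n assume "n \<in> {n::nat. n > 0 \<and> (\<exists>ln. degree ln = 1 \<and>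
            poly_iter F n = pcompose (poly_iter (pcompose F l) n) ln)}"
    then obtain ln where n0: "n > 0" and dln: "degree ln = 1"
      and h: "poly_iter F n = pcompose (poly_iter G n) ln" by (auto simp: G_def)
    have "poly_iter F' n = pcompose ui (pcompose (pcompose (poly_iter G n) ln) u)"
      using it h by simp
    also have "\<dots> = pcompose ui (pcompose (poly_iter G n) (pcompose (pcompose u ui) (pcompose ln u)))"
      using uu by (simp add: pcompose_assoc)
    also have "\<dots> = pcompose (poly_iter (pcompose F' l') n) (pcompose ui (pcompose ln u))"
      using itG by (simp add: pcompose_assoc)
    finally show "n \<in> {n::nat. n > 0 \<and> (\<exists>ln. degree ln = 1 \<and>
            poly_iter F' n = pcompose (poly_iter (pcompose F' l') n) ln)}"
      using n0 dln by (auto simp: degree_pcompose ui_def u_def intro!: exI[of _ "pcompose ui (pcompose ln u)"])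
  qed
  have inf': "infinite {n::nat. n > 0 \<and> (\<exists>ln. degree ln = 1 \<and>
            poly_iter F' n = pcompose (poly_iter (pcompose F' l') n) ln)}"
    using inf sub infinite_super by blast
  have bk: "pcompose u (pcompose (pcompose ui (pcompose A u)) ui) = A" for A :: "'a poly"
  proof -
    have "pcompose u (pcompose (pcompose ui (pcompose A u)) ui)
        = pcompose (pcompose u ui) (pcompose A (pcompose u ui))" by (simp add: pcompose_assoc)
    then show ?thesis using uu by simp
  qed
  from centered_main[OF dF' d1 dl' c1 inf'] show ?thesis
  proof
    assume "\<exists>k::nat. k \<ge> 1 \<and> poly_iter F' k = poly_iter (pcompose F' l') k"
    then obtain k where k: "k \<ge> 1" "poly_iter F' k = poly_iter (pcompose F' l') k" by blast
    then have "pcompose ui (pcompose (poly_iter F k) u) = pcompose ui (pcompose (poly_iter G k) u)"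
      using it itG by simp
    then have "poly_iter F k = poly_iter G k" using bk by metis
    then show ?thesis using k(1) by (auto simp: G_def)
  next
    assume "\<exists>\<epsilon> \<delta>. \<epsilon> \<noteq> 0 \<and> \<delta> \<noteq> 0 \<and> F' = monom \<epsilon> d \<and> l' = monom \<delta> 1"
    then obtain \<epsilon> \<delta> where ed: "\<epsilon> \<noteq> 0" "\<delta> \<noteq> 0" "F' = monom \<epsilon> d" "l' = monom \<delta> 1" by blast
    have pci: "poly_comp_inv ui = u" by (simp add: poly_comp_inv_def ui_def u_def)
    have "F = pcompose u (pcompose F' ui)" by (simp only: F'_def bk)
    then have "F = pcompose (poly_comp_inv ui) (pcompose (monom \<epsilon> d) ui)"
      using ed(3) pci by (simp only:)
    moreover have "l = pcompose u (pcompose l' ui)" by (simp only: l'_def bk)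
    then have "l = pcompose (poly_comp_inv ui) (pcompose (monom \<delta> 1) ui)"
      using ed(4) pci by (simp only:)
    moreover have "degree ui = 1" by (simp add: ui_def)
    ultimately show ?thesis using ed(1,2) by blast
  qed
qed

end
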